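(* Let $M=\begin{bmatrix} A & B\\ 0 & C\end{bmatrix}$ be an ACI-matrix over a field $\mathbb{F}$ whose lower-left zero block is Big or Medium. Then the following are equivalent: (i) $A$ is FRmR and $C$ is FCmR; (ii) $\mathrm{maxRank}(M)=\mathrm{rows}(A)+\mathrm{cols}(C)$.
   Context: Let $\mathbb{F}$ be a field. An ACI-matrix is a matrix with entries in $\mathbb{F}[x_1,\dots,x_k]$ whose entries are polynomials of degree at most one and such that no indeterminate appears in two different columns. A completion is an assignment of values in $\mathbb{F}$ to all indeterminates; $\mathrm{maxRank}(M)$ is the maximum rank of a completion. $\mathrm{rows}(\cdot)$, $\mathrm{cols}(\cdot)$ denote numbers of rows and columns. Matrices of size $0\times q$ (wide degenerate), $p\times 0$ (tall degenerate) and $0\times 0$ (void) are ACI-matrices and blocks may be degenerate. An ACI-matrix $N$ is FRmR if $\mathrm{maxRank}(N)=\mathrm{rows}(N)$ and FCmR if $\mathrm{maxRank}(N)=\mathrm{cols}(N)$; by convention tall degenerate ones are FRmR, wide degenerate ones are FCmR, and the void one is both. For an $m\times n$ block matrix $\begin{bmatrix} A & B\\ 0 & C\end{bmatrix}$ whose lower-left block $0$ is $r\times s$, the zero block is Big if $r+s>\max\{m,n\}$ and Medium if $r+s=\max\{m,n\}$. *)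

theory Defs
  imports "Jordan_Normal_Form.DL_Rank"
begin

text \<open>An entry of an ACI-matrix is a polynomial of degree at most one in the
  indeterminates of type 'v (a finite type: x_1,...,x_k), represented by its constant
  term and its coefficient vector: (c, l) stands for c + sum_v l v * x_v.\<close>

type_synonym ('a, 'v) aff = "'a \<times> ('v \<Rightarrow> 'a)"

definition aff_eval :: "('a::field, 'v::finite) aff \<Rightarrow> ('v \<Rightarrow> 'a) \<Rightarrow> 'a" where
  "aff_eval e x = fst e + (\<Sum>v\<in>UNIV. snd e v * x v)"

definition aff_zero :: "('a::field, 'v) aff" where
  "aff_zero = (0, \<lambda>_. 0)"

text \<open>Indeterminate v appears in entry (i,j) iff its coefficient there is nonzero.
  ACI: no indeterminate appears in two different columns.\<close>
definition is_ACI :: "('a::field, 'v::finite) aff mat \<Rightarrow> bool" where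
  "is_ACI M = (\<forall>i1 j1 i2 j2 v. i1 < dim_row M \<and> i2 < dim_row M \<and> j1 < dim_col M \<and> j2 < dim_col M
      \<and> snd (M $$ (i1, j1)) v \<noteq> 0 \<and> snd (M $$ (i2, j2)) v \<noteq> 0 \<longrightarrow> j1 = j2)"

definition completion :: "('a::field, 'v::finite) aff mat \<Rightarrow> ('v \<Rightarrow> 'a) \<Rightarrow> 'a mat" where
  "completion M x = map_mat (\<lambda>e. aff_eval e x) M"

definition maxRank :: "('a::field, 'v::finite) aff mat \<Rightarrow> nat" where
  "maxRank M = Max {vec_space.rank (dim_row M) (completion M x) | x. True}"

text \<open>Conventions: tall degenerate (p x 0) matrices are FRmR, wide degenerate (0 x q)
  ones are FCmR, the void one is both.\<close>
definition FRmR :: "('a::field, 'v::finite) aff mat \<Rightarrow> bool" where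
  "FRmR N = (maxRank N = dim_row N \<or> dim_col N = 0)"

definition FCmR :: "('a::field, 'v::finite) aff mat \<Rightarrow> bool" where
  "FCmR N = (maxRank N = dim_col N \<or> dim_row N = 0)"

end

theory Submission
  imports Defs "Jordan_Normal_Form.Matrix_Kernel"
begin

lemma (in vec_space) rank_basis_exists:
  assumes X: "X \<in> carrier_mat n nc"
  shows "\<exists>S. S \<subseteq> set (cols X) \<and> finite S \<and> lin_indpt S \<and> card S = rank X \<and> set (cols X) \<subseteq> span S"
proof -
  obtain S where S: "maximal S (\<lambda>T. T \<subseteq> set (cols X) \<and> lin_indpt T)"
    using maximal_exists[of "(\<lambda>T. T \<subseteq> set (cols X) \<and> lin_indpt T)" "card (set (cols X))" "{}"]
    by (meson List.finite_set card_mono empty_iff empty_subsetI finite_lin_indpt2 rev_finite_subset)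
  have sub: "S \<subseteq> set (cols X)" and li: "lin_indpt S" using S unfolding maximal_def by auto
  have cx: "set (cols X) \<subseteq> carrier_vec n" using X cols_dim by blast
  have fin: "finite S" using sub finite_subset by blast
  have "set (cols X) \<subseteq> span S"
  proof
    fix v assume v: "v \<in> set (cols X)"
    show "v \<in> span S"
    proof (cases "v \<in> S")
      case True then show ?thesis using in_own_span sub cx by blast
    next
      case False
      have "\<not> lin_indpt (S \<union> {v})"
      proof
        assume "lin_indpt (S \<union> {v})"
        then have "S \<union> {v} = S" using S v sub unfolding maximal_def by blast
        then show False using False by blast
      qed
      then show ?thesis using lin_dep_iff_in_span[of S v] sub cx li v False by auto
    qed
  qed
  then show ?thesis using sub fin li rank_card_indpt[OF X S] by auto
qed

lemma (in vec_space) card_le_span: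
  assumes "finite T" "finite W" "W \<subseteq> carrier_vec n" "lin_indpt T" "T \<subseteq> span W"
  shows "card T \<le> card W"
  using replacement[OF assms(1,2) _ assms(4,5)] assms(3) by fastforce

lemma (in vec_space) rank_le_span:
  assumes X: "X \<in> carrier_mat n nc" and "finite W" "W \<subseteq> carrier_vec n" "set (cols X) \<subseteq> span W"
  shows "rank X \<le> card W"
proof -
  obtain S where S: "S \<subseteq> set (cols X)" "finite S" "lin_indpt S" "card S = rank X"
    using rank_basis_exists[OF X] by blast
  show ?thesis using card_le_span[of S W] S assms by auto
qed

lemma (in vec_space) card_le_rank:
  assumes X: "X \<in> carrier_mat n nc" and "finite T" "lin_indpt T" "T \<subseteq> span (set (cols X))"
  shows "card T \<le> rank X"
proof -
  obtain S where S: "S \<subseteq> set (cols X)" "finite S" "lin_indpt S" "card S = rank X" "set (cols X) \<subseteq> span S"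
    using rank_basis_exists[OF X] by blast
  have cx: "set (cols X) \<subseteq> carrier_vec n" using X cols_dim by blast
  have "span (set (cols X)) \<subseteq> span S" using span_subsetI[of S "set (cols X)"] S cx by auto
  then show ?thesis using card_le_span[of T S] S assms cx by auto
qed

lemma (in vec_space) rank_le_nr:
  assumes X: "X \<in> carrier_mat n nc"
  shows "rank X \<le> n"
proof -
  have "rank X \<le> card (set (unit_vecs n :: 'a vec list))"
    apply (rule rank_le_span[OF X])
    using span_unit_vecs_is_carrier unit_vecs_carrier cols_dim[of X] X by auto
  then show ?thesis by (metis distinct_card unit_vecs_distinct unit_vecs_length)
qed

lemma (in vec_space) full_rank_distinct:
  assumes X: "X \<in> carrier_mat n nc" and r: "rank X = nc"
  shows "distinct (cols X)"
proof (rule ccontr)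
  assume "\<not> distinct (cols X)"
  then have "card (set (cols X)) < nc" using X card_distinct[of "cols X"] card_length[of "cols X"]
    by (metis carrier_matD(2) cols_length le_neq_implies_less)
  moreover {
    have cx: "set (cols X) \<subseteq> carrier_vec n" using X cols_dim by blast
    have "rank X \<le> card (set (cols X))"
    apply (rule rank_le_span[OF X]) using cx in_own_span[OF cx] by auto }
  ultimately show False using r by simp
qed

lemma (in vec_space) full_rank_span:
  assumes X: "X \<in> carrier_mat n nc" and r: "rank X = n"
  shows "span (set (cols X)) = carrier_vec n"
proof -
  obtain S where S: "S \<subseteq> set (cols X)" "finite S" "lin_indpt S" "card S = rank X" "set (cols X) \<subseteq> span S"
    using rank_basis_exists[OF X] by blast
  have cx: "set (cols X) \<subseteq> carrier_vec n" using X cols_dim by blast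
  have "basis S" using dim_li_is_basis[of S] S cx r dim_is_n by auto
  then have "span S = carrier_vec n" unfolding basis_def by auto
  moreover have "span S \<subseteq> span (set (cols X))" using span_is_monotone S(1) by auto
  moreover have "span (set (cols X)) \<subseteq> carrier_vec n" using span_closed cx by auto
  ultimately show ?thesis by auto
qed

lemma col_four_block_left:
  assumes A: "A \<in> carrier_mat p s" and B: "B \<in> carrier_mat p q" and C: "C \<in> carrier_mat r q"
    and j: "j < s"
  shows "col (four_block_mat A B (0\<^sub>m r s) C) j = col A j @\<^sub>v 0\<^sub>v r"
  apply (rule eq_vecI)
  using A B C j by (auto simp: index_append_vec)

lemma col_four_block_right:
  assumes A: "A \<in> carrier_mat p s" and B: "B \<in> carrier_mat p q" and C: "C \<in> carrier_mat r q"
    and j: "j < q"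
  shows "col (four_block_mat A B (0\<^sub>m r s) C) (s + j) = col B j @\<^sub>v col C j"
  apply (rule eq_vecI)
  using A B C j by (auto simp: index_append_vec)
lemma set_cols_four_block:
  assumes A: "A \<in> carrier_mat p s" and B: "B \<in> carrier_mat p q" and C: "C \<in> carrier_mat r q"
  shows "set (cols (four_block_mat A B (0\<^sub>m r s) C)) =
     (\<lambda>j. col A j @\<^sub>v 0\<^sub>v r) ` {..<s} \<union> (\<lambda>j. col B j @\<^sub>v col C j) ` {..<q}"
proof -
  let ?M = "four_block_mat A B (0\<^sub>m r s) C"
  have dc: "dim_col ?M = s + q" using A B C by simp
  have "set (cols ?M) = col ?M ` {..<s+q}"
    unfolding cols_def dc by (simp add: lessThan_atLeast0)
  also have "{..<s+q} = {..<s} \<union> (\<lambda>j. s + j) ` {..<q}"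
  proof -
    have "(\<lambda>j. s + j) ` {..<q} = {s..<s+q}" using image_add_atLeastLessThan[of s 0 q] by (simp add: add.commute lessThan_atLeast0)
    then show ?thesis by (auto simp: lessThan_atLeast0)
  qed
  also have "col ?M ` ({..<s} \<union> (\<lambda>j. s + j) ` {..<q}) =
     col ?M ` {..<s} \<union> (\<lambda>j. col ?M (s + j)) ` {..<q}"
    by (simp add: image_Un image_image)
  also have "col ?M ` {..<s} = (\<lambda>j. col A j @\<^sub>v 0\<^sub>v r) ` {..<s}"
    by (rule image_cong) (simp_all add: col_four_block_left[OF A B C])
  also have "(\<lambda>j. col ?M (s + j)) ` {..<q} = (\<lambda>j. col B j @\<^sub>v col C j) ` {..<q}"
    by (rule image_cong) (simp_all add: col_four_block_right[OF A B C])
  finally show ?thesis .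
qed

lemma rank_four_block_le1:
  fixes A :: "'a::field mat"
  assumes A: "A \<in> carrier_mat p s" and B: "B \<in> carrier_mat p q" and C: "C \<in> carrier_mat r q"
  shows "vec_space.rank (p + r) (four_block_mat A B (0\<^sub>m r s) C) \<le> vec_space.rank p A + q"
proof -
  interpret PA: vec_space "TYPE('a)" p .
  interpret PM: vec_space "TYPE('a)" "p + r" .
  interpret VD: vardim "TYPE('a)" .
  let ?M = "four_block_mat A B (0\<^sub>m r s) C"
  have M: "?M \<in> carrier_mat (p + r) (s + q)" using A B C by auto
  obtain S where S: "S \<subseteq> set (cols A)" "finite S" "PA.lin_indpt S" "card S = PA.rank A"
     "set (cols A) \<subseteq> PA.span S"
    using PA.rank_basis_exists[OF A] by blast
  have SA: "S \<subseteq> carrier_vec p" using S(1) A cols_dim by blast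
  define W where "W = (\<lambda>v. v @\<^sub>v 0\<^sub>v r) ` S \<union> (\<lambda>j. col B j @\<^sub>v col C j) ` {..<q}"
  have finW: "finite W" unfolding W_def using S(2) by auto
  have cardW: "card W \<le> PA.rank A + q"
    unfolding W_def using card_Un_le card_image_le S(2,4)
    by (metis (no_types, lifting) add_mono card_lessThan finite_lessThan order_trans)
  have Wc: "W \<subseteq> carrier_vec (p + r)" unfolding W_def using SA B C by auto
  have "set (cols ?M) \<subseteq> PM.span W"
  proof -
    have "(\<lambda>j. col A j @\<^sub>v 0\<^sub>v r) ` {..<s} \<subseteq> PM.span W"
    proof
      fix x assume "x \<in> (\<lambda>j. col A j @\<^sub>v 0\<^sub>v r) ` {..<s}"
      then obtain j where j: "j < s" "x = col A j @\<^sub>v 0\<^sub>v r" by auto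
      have "col A j \<in> PA.span S" using S(5) j A by (auto simp: cols_def)
      then have "x \<in> (\<lambda>v. v @\<^sub>v 0\<^sub>v r) ` PA.span S" using j by auto
      also have "\<dots> = PM.span ((\<lambda>v. v @\<^sub>v 0\<^sub>v r) ` S)" using VD.span_pad(1)[OF SA, of r] by simp
      also have "\<dots> \<subseteq> PM.span W" using PM.span_is_monotone Wc unfolding W_def by auto
      finally show "x \<in> PM.span W" .
    qed
    moreover have "(\<lambda>j. col B j @\<^sub>v col C j) ` {..<q} \<subseteq> PM.span W"
      using PM.in_own_span[OF Wc] unfolding W_def by auto
    ultimately show ?thesis using set_cols_four_block[OF A B C] by auto
  qed
  then have "PM.rank ?M \<le> card W" using PM.rank_le_span[OF M finW Wc] by simp
  then show ?thesis using cardW by simp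
qed

lemma append_split_vec:
  fixes b :: "'a::field vec"
  assumes "b \<in> carrier_vec p" "c \<in> carrier_vec r"
  shows "b @\<^sub>v c = (b @\<^sub>v 0\<^sub>v r) + (0\<^sub>v p @\<^sub>v c)"
  apply (rule eq_vecI) using assms by (auto simp: index_append_vec)

lemma append_split_vec2:
  fixes b :: "'a::field vec"
  assumes "b \<in> carrier_vec p" "c \<in> carrier_vec r"
  shows "0\<^sub>v p @\<^sub>v c = (b @\<^sub>v c) + (-1) \<cdot>\<^sub>v (b @\<^sub>v 0\<^sub>v r)"
  apply (rule eq_vecI) using assms by (auto simp: index_append_vec)

lemma rank_four_block_le2:
  fixes A :: "'a::field mat"
  assumes A: "A \<in> carrier_mat p s" and B: "B \<in> carrier_mat p q" and C: "C \<in> carrier_mat r q"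
  shows "vec_space.rank (p + r) (four_block_mat A B (0\<^sub>m r s) C) \<le> p + vec_space.rank r C"
proof -
  interpret PA: vec_space "TYPE('a)" p .
  interpret PC: vec_space "TYPE('a)" r .
  interpret PM: vec_space "TYPE('a)" "p + r" .
  interpret VD: vardim "TYPE('a)" .
  let ?M = "four_block_mat A B (0\<^sub>m r s) C"
  let ?U = "set (unit_vecs p) :: 'a vec set"
  have M: "?M \<in> carrier_mat (p + r) (s + q)" using A B C by auto
  obtain S where S: "S \<subseteq> set (cols C)" "finite S" "PC.lin_indpt S" "card S = PC.rank C"
     "set (cols C) \<subseteq> PC.span S"
    using PC.rank_basis_exists[OF C] by blast
  have SC: "S \<subseteq> carrier_vec r" using S(1) C cols_dim by blast
  have U: "?U \<subseteq> carrier_vec p" by (rule unit_vecs_carrier)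
  have cardU: "card ?U = p" by (metis distinct_card PA.unit_vecs_distinct PA.unit_vecs_length)
  define W where "W = (\<lambda>v. v @\<^sub>v 0\<^sub>v r) ` ?U \<union> (\<lambda>v. 0\<^sub>v p @\<^sub>v v) ` S"
  have finW: "finite W" unfolding W_def using S(2) by auto
  have cardW: "card W \<le> p + PC.rank C"
    unfolding W_def using card_Un_le card_image_le S(2,4) cardU
    by (metis (no_types, lifting) add_mono finite_set order_trans)
  have Wc: "W \<subseteq> carrier_vec (p + r)" unfolding W_def using SC U by auto
  have padr: "v @\<^sub>v 0\<^sub>v r \<in> PM.span W" if v: "v \<in> carrier_vec p" for v
  proof -
    have "v \<in> PA.span ?U" using v PA.span_unit_vecs_is_carrier by simp
    then have "v @\<^sub>v 0\<^sub>v r \<in> (\<lambda>v. v @\<^sub>v 0\<^sub>v r) ` PA.span ?U" by auto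
    also have "\<dots> = PM.span ((\<lambda>v. v @\<^sub>v 0\<^sub>v r) ` ?U)" using VD.span_pad(1)[OF U, of r] by simp
    also have "\<dots> \<subseteq> PM.span W" using PM.span_is_monotone Wc unfolding W_def by auto
    finally show ?thesis .
  qed
  have padl: "0\<^sub>v p @\<^sub>v v \<in> PM.span W" if v: "v \<in> set (cols C)" for v
  proof -
    have "v \<in> PC.span S" using v S(5) by auto
    then have "0\<^sub>v p @\<^sub>v v \<in> (\<lambda>v. 0\<^sub>v p @\<^sub>v v) ` PC.span S" by auto
    also have "\<dots> = PM.span ((\<lambda>v. 0\<^sub>v p @\<^sub>v v) ` S)" using VD.span_pad(2)[OF SC, of p] by (simp add: add.commute)
    also have "\<dots> \<subseteq> PM.span W" using PM.span_is_monotone Wc unfolding W_def by auto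
    finally show ?thesis .
  qed
  have sm: "LinearCombinations.submodule class_ring (PM.span W) PM.V" using PM.span_is_submodule[OF Wc] .
  have "set (cols ?M) \<subseteq> PM.span W"
  proof -
    have "(\<lambda>j. col A j @\<^sub>v 0\<^sub>v r) ` {..<s} \<subseteq> PM.span W"
      using padr A by auto
    moreover have "(\<lambda>j. col B j @\<^sub>v col C j) ` {..<q} \<subseteq> PM.span W"
    proof
      fix x assume "x \<in> (\<lambda>j. col B j @\<^sub>v col C j) ` {..<q}"
      then obtain j where j: "j < q" "x = col B j @\<^sub>v col C j" by auto
      have cC: "col C j \<in> set (cols C)" using j C by (auto simp: cols_def)
      have "x = (col B j @\<^sub>v 0\<^sub>v r) + (0\<^sub>v p @\<^sub>v col C j)"
        using j append_split_vec[of "col B j" p "col C j" r] B C by auto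
      moreover have "col B j @\<^sub>v 0\<^sub>v r \<in> PM.span W" using padr B by auto
      moreover have "0\<^sub>v p @\<^sub>v col C j \<in> PM.span W" using padl cC by auto
      ultimately show "x \<in> PM.span W"
        using LinearCombinations.submodule.m_closed[OF sm] by (simp add: module_vec_simps)
    qed
    ultimately show ?thesis using set_cols_four_block[OF A B C] by auto
  qed
  then have "PM.rank ?M \<le> card W" using PM.rank_le_span[OF M finW Wc] by simp
  then show ?thesis using cardW by simp
qed

lemma rank_four_block_ge:
  fixes A :: "'a::field mat"
  assumes A: "A \<in> carrier_mat p s" and B: "B \<in> carrier_mat p q" and C: "C \<in> carrier_mat r q"
    and rA: "vec_space.rank p A = p" and rC: "vec_space.rank r C = q"
  shows "p + q \<le> vec_space.rank (p + r) (four_block_mat A B (0\<^sub>m r s) C)"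
proof -
  interpret PA: vec_space "TYPE('a)" p .
  interpret PC: vec_space "TYPE('a)" r .
  interpret PM: vec_space "TYPE('a)" "p + r" .
  interpret VD: vardim "TYPE('a)" .
  let ?M = "four_block_mat A B (0\<^sub>m r s) C"
  let ?U = "set (unit_vecs p) :: 'a vec set"
  have M: "?M \<in> carrier_mat (p + r) (s + q)" using A B C by auto
  have U: "?U \<subseteq> carrier_vec p" by (rule unit_vecs_carrier)
  have cardU: "card ?U = p" by (metis distinct_card PA.unit_vecs_distinct PA.unit_vecs_length)
  have liU: "PA.lin_indpt ?U" using PA.unit_vecs_basis unfolding PA.basis_def by auto
  have CC: "set (cols C) \<subseteq> carrier_vec r" using C cols_dim by blast
  have dC: "distinct (cols C)" using PC.full_rank_distinct[OF C rC] .
  have liC: "PC.lin_indpt (set (cols C))" using PC.full_rank_lin_indpt[OF C rC dC] .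
  have cardC: "card (set (cols C)) = q" using distinct_card[OF dC] C by simp
  have spA: "PA.span (set (cols A)) = carrier_vec p" using PA.full_rank_span[OF A rA] .
  have CM: "set (cols ?M) \<subseteq> carrier_vec (p + r)" using cols_dim[of ?M] A C by auto
  have sm: "LinearCombinations.submodule class_ring (PM.span (set (cols ?M))) PM.V"
    using PM.span_is_submodule[OF CM] .
  have Acols: "set (cols A) = col A ` {..<s}" using A
    by (simp add: cols_def lessThan_atLeast0)
  have padr: "v @\<^sub>v 0\<^sub>v r \<in> PM.span (set (cols ?M))" if v: "v \<in> carrier_vec p" for v
  proof -
    have AC: "set (cols A) \<subseteq> carrier_vec p" using A cols_dim by blast
    have "v @\<^sub>v 0\<^sub>v r \<in> (\<lambda>v. v @\<^sub>v 0\<^sub>v r) ` PA.span (set (cols A))" using v spA by auto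
    also have "\<dots> = PM.span ((\<lambda>v. v @\<^sub>v 0\<^sub>v r) ` set (cols A))" using VD.span_pad(1)[OF AC, of r] by simp
    also have "\<dots> \<subseteq> PM.span (set (cols ?M))"
      apply (rule PM.span_is_monotone)
      using set_cols_four_block[OF A B C] Acols by auto
    finally show ?thesis .
  qed
  define T where "T = (\<lambda>v. v @\<^sub>v 0\<^sub>v r) ` ?U \<union> (\<lambda>v. 0\<^sub>v p @\<^sub>v v) ` set (cols C)"
  have finT: "finite T" unfolding T_def by auto
  have liT: "PM.lin_indpt T"
    using VD.padr_padl_lindep[OF U liU CC liC] unfolding T_def by simp
  have U0: "0\<^sub>v p \<notin> ?U"
  proof
    assume "0\<^sub>v p \<in> ?U"
    then obtain i where "i < p" "(0\<^sub>v p :: 'a vec) = unit_vec p i" unfolding unit_vecs_def by auto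
    then have "(0\<^sub>v p :: 'a vec) $ i = unit_vec p i $ i" by simp
    then show False using \<open>i < p\<close> by simp
  qed
  have "card T = card ((\<lambda>v. v @\<^sub>v 0\<^sub>v r) ` ?U) + card ((\<lambda>v. 0\<^sub>v p @\<^sub>v v) ` set (cols C))"
    unfolding T_def
    apply (rule card_Un_disjoint) using VD.pad_disjoint[OF U U0 CC] by auto
  also have "card ((\<lambda>v. v @\<^sub>v 0\<^sub>v r) ` ?U) = p"
    using card_image[OF inj_on_subset[OF VD.padr_inj U]] cardU by simp
  also have "card ((\<lambda>v. 0\<^sub>v p @\<^sub>v v) ` set (cols C)) = q"
    using card_image[OF inj_on_subset[OF VD.padl_inj CC]] cardC by simp
  finally have cardT: "card T = p + q" .
  have "T \<subseteq> PM.span (set (cols ?M))"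
  proof -
    have "(\<lambda>v. v @\<^sub>v 0\<^sub>v r) ` ?U \<subseteq> PM.span (set (cols ?M))" using padr U by auto
    moreover have "(\<lambda>v. 0\<^sub>v p @\<^sub>v v) ` set (cols C) \<subseteq> PM.span (set (cols ?M))"
    proof
      fix x assume "x \<in> (\<lambda>v. 0\<^sub>v p @\<^sub>v v) ` set (cols C)"
      then obtain j where j: "j < q" "x = 0\<^sub>v p @\<^sub>v col C j" using C by (auto simp: cols_def)
      have x: "x = (col B j @\<^sub>v col C j) + (-1) \<cdot>\<^sub>v (col B j @\<^sub>v 0\<^sub>v r)"
        using j append_split_vec2[of "col B j" p "col C j" r] B C by auto
      have "col B j @\<^sub>v col C j \<in> set (cols ?M)" using set_cols_four_block[OF A B C] j by auto
      then have 1: "col B j @\<^sub>v col C j \<in> PM.span (set (cols ?M))" using PM.in_own_span[OF CM] by auto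
      have "col B j @\<^sub>v 0\<^sub>v r \<in> PM.span (set (cols ?M))" using padr B j by auto
      then have 2: "(-1) \<cdot>\<^sub>v (col B j @\<^sub>v 0\<^sub>v r) \<in> PM.span (set (cols ?M))"
        using LinearCombinations.submodule.smult_closed[OF sm, of "-1"] by (simp add: module_vec_simps class_ring_simps)
      show "x \<in> PM.span (set (cols ?M))" unfolding x
        using LinearCombinations.submodule.m_closed[OF sm 1 2] by (simp add: module_vec_simps)
    qed
    ultimately show ?thesis unfolding T_def by auto
  qed
  then show ?thesis using PM.card_le_rank[OF M finT liT] cardT by simp
qed


lemma completion_carrier: "completion X x \<in> carrier_mat (dim_row X) (dim_col X)"
  unfolding completion_def by auto

lemma completion_dims[simp]: "dim_row (completion X x) = dim_row X" "dim_col (completion X x) = dim_col X"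
  unfolding completion_def by auto

lemma completion_four_block:
  fixes A B C :: "('a::field, 'v::finite) aff mat"
  assumes A: "A \<in> carrier_mat p s" and B: "B \<in> carrier_mat p q" and C: "C \<in> carrier_mat r q"
  shows "completion (four_block_mat A B (mat r s (\<lambda>_. aff_zero)) C) x
     = four_block_mat (completion A x) (completion B x) (0\<^sub>m r s) (completion C x)"
proof -
  have h0: "map_mat (\<lambda>e. aff_eval e x) (mat r s (\<lambda>_. aff_zero)) = (0\<^sub>m r s :: 'a mat)"
    by (rule eq_matI) (auto simp: aff_eval_def aff_zero_def)
  show ?thesis unfolding completion_def
    apply (subst map_four_block_mat[OF A B _ C, of "mat r s (\<lambda>_. aff_zero)"])
    using h0 by auto
qed

lemma maxRank_ge:
  fixes X :: "('a::field, 'v::finite) aff mat"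
  shows "vec_space.rank (dim_row X) (completion X x) \<le> maxRank X"
proof -
  have fin: "finite {vec_space.rank (dim_row X) (completion X x) | x. True}"
  proof (rule finite_subset[of _ "{..dim_row X}"])
    show "{vec_space.rank (dim_row X) (completion X x) | x. True} \<subseteq> {..dim_row X}"
      using vec_space.rank_le_nr[OF completion_carrier] by auto
  qed auto
  show ?thesis unfolding maxRank_def by (rule Max_ge[OF fin]) auto
qed

lemma maxRank_attained:
  fixes X :: "('a::field, 'v::finite) aff mat"
  shows "\<exists>x. vec_space.rank (dim_row X) (completion X x) = maxRank X"
proof -
  have fin: "finite {vec_space.rank (dim_row X) (completion X x) | x. True}"
  proof (rule finite_subset[of _ "{..dim_row X}"])
    show "{vec_space.rank (dim_row X) (completion X x) | x. True} \<subseteq> {..dim_row X}"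
      using vec_space.rank_le_nr[OF completion_carrier] by auto
  qed auto
  have "maxRank X \<in> {vec_space.rank (dim_row X) (completion X x) | x. True}"
    unfolding maxRank_def by (rule Max_in[OF fin]) auto
  then show ?thesis by auto
qed

lemma maxRank_le_rows:
  fixes X :: "('a::field, 'v::finite) aff mat"
  shows "maxRank X \<le> dim_row X"
  using maxRank_attained[of X] vec_space.rank_le_nr[OF completion_carrier] by metis

lemma maxRank_le_cols:
  fixes X :: "('a::field, 'v::finite) aff mat"
  shows "maxRank X \<le> dim_col X"
  using maxRank_attained[of X] vec_space.rank_le_nc[OF completion_carrier] by metis

theorem theorem2p4:
  fixes A B C :: "('a::field, 'v::finite) aff mat"
    and M :: "('a, 'v) aff mat"
    and m n r s :: nat
  assumes "A \<in> carrier_mat (m - r) s"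
    and "B \<in> carrier_mat (m - r) (n - s)"
    and "C \<in> carrier_mat r (n - s)"
    and "r \<le> m" and "s \<le> n"
    and "M = four_block_mat A B (mat r s (\<lambda>_. aff_zero)) C"
    and "is_ACI M"
    and "r + s \<ge> max m n"
  shows "(FRmR A \<and> FCmR C) \<longleftrightarrow> maxRank M = dim_row A + dim_col C"
proof -
  define p where "p = m - r"
  define q where "q = n - s"
  have A: "A \<in> carrier_mat p s" and B: "B \<in> carrier_mat p q" and C: "C \<in> carrier_mat r q"
    using assms(1-3) unfolding p_def q_def by auto
  have ps: "p \<le> s" and qr: "q \<le> r" using assms(4,5,8) unfolding p_def q_def by auto
  have Mdef: "M = four_block_mat A B (mat r s (\<lambda>_. aff_zero)) C" using assms(6) .
  have dM: "dim_row M = p + r" "dim_col M = s + q" using A C Mdef by auto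
  have cM: "\<And>x. completion M x = four_block_mat (completion A x) (completion B x) (0\<^sub>m r s) (completion C x)"
    using completion_four_block[OF A B C] Mdef by simp
  have cA: "\<And>x. completion A x \<in> carrier_mat p s" using completion_carrier[of A] A by auto
  have cB: "\<And>x. completion B x \<in> carrier_mat p q" using completion_carrier[of B] B by auto
  have cC: "\<And>x. completion C x \<in> carrier_mat r q" using completion_carrier[of C] C by auto
  have rkM: "\<And>x. vec_space.rank (dim_row M) (completion M x) =
      vec_space.rank (p + r) (four_block_mat (completion A x) (completion B x) (0\<^sub>m r s) (completion C x))"
    using cM dM by simp
  have dA: "dim_row A = p" and dC: "dim_col C = q" and dCr: "dim_row C = r" using A C by auto
  have FR: "FRmR A \<longleftrightarrow> maxRank A = p"
    using maxRank_le_rows[of A] ps dA A unfolding FRmR_def by auto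
  have FC: "FCmR C \<longleftrightarrow> maxRank C = q"
    using maxRank_le_cols[of C] qr dC C unfolding FCmR_def by auto
  have upper: "maxRank M \<le> p + q"
  proof -
    obtain x where x: "vec_space.rank (dim_row M) (completion M x) = maxRank M"
      using maxRank_attained by blast
    have "vec_space.rank r (completion C x) \<le> q" using vec_space.rank_le_nc[OF cC] .
    then show ?thesis using x rkM[of x] rank_four_block_le2[OF cA[of x] cB[of x] cC[of x]] by simp
  qed
  show ?thesis
  proof
    assume "FRmR A \<and> FCmR C"
    then have mA: "maxRank A = p" and mC: "maxRank C = q" using FR FC by auto
    obtain xA where xA: "vec_space.rank p (completion A xA) = p"
      using maxRank_attained[of A] mA dA by auto
    obtain xC where xC: "vec_space.rank r (completion C xC) = q"
      using maxRank_attained[of C] mC dCr by auto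
    define inA where "inA v = (\<exists>i j. i < p \<and> j < s \<and> snd (A $$ (i, j)) v \<noteq> 0)" for v
    define x where "x v = (if inA v then xA v else xC v)" for v
    have eA: "completion A x = completion A xA"
    proof (rule eq_matI)
      fix i j assume ij: "i < dim_row (completion A xA)" "j < dim_col (completion A xA)"
      then have ij': "i < p" "j < s" using A by auto
      have "(\<Sum>v\<in>UNIV. snd (A $$ (i, j)) v * x v) = (\<Sum>v\<in>UNIV. snd (A $$ (i, j)) v * xA v)"
        by (rule sum.cong) (auto simp: x_def inA_def ij')
      then show "completion A x $$ (i, j) = completion A xA $$ (i, j)"
        using ij A unfolding completion_def aff_eval_def by auto
    qed (auto)
    have eC: "completion C x = completion C xC"
    proof (rule eq_matI)
      fix i j assume ij: "i < dim_row (completion C xC)" "j < dim_col (completion C xC)"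
      then have ij': "i < r" "j < q" using C by auto
      have "\<not> inA v" if v: "snd (C $$ (i, j)) v \<noteq> 0" for v
      proof
        assume "inA v"
        then obtain i' j' where i'j': "i' < p" "j' < s" "snd (A $$ (i', j')) v \<noteq> 0"
          unfolding inA_def by auto
        have "M $$ (i', j') = A $$ (i', j')" using i'j' A C Mdef by auto
        moreover have "M $$ (p + i, s + j) = C $$ (i, j)" using ij' A C Mdef by auto
        ultimately have "j' = s + j"
          using assms(7) i'j' ij' v dM unfolding is_ACI_def by (metis add_less_cancel_left trans_less_add1)
        then show False using i'j' by simp
      qed
      then have "(\<Sum>v\<in>UNIV. snd (C $$ (i, j)) v * x v) = (\<Sum>v\<in>UNIV. snd (C $$ (i, j)) v * xC v)"
        by (intro sum.cong) (auto simp: x_def)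
      then show "completion C x $$ (i, j) = completion C xC $$ (i, j)"
        using ij C unfolding completion_def aff_eval_def by auto
    qed (auto)
    have "p + q \<le> vec_space.rank (dim_row M) (completion M x)"
      using rkM[of x] rank_four_block_ge[OF cA[of x] cB[of x] cC[of x]] eA eC xA xC by simp
    then have "p + q \<le> maxRank M" using maxRank_ge[of M x] by simp
    then show "maxRank M = dim_row A + dim_col C" using upper dA dC by simp
  next
    assume h: "maxRank M = dim_row A + dim_col C"
    obtain x where x: "vec_space.rank (dim_row M) (completion M x) = maxRank M"
      using maxRank_attained by blast
    have r: "vec_space.rank (p + r) (four_block_mat (completion A x) (completion B x) (0\<^sub>m r s) (completion C x)) = p + q"
      using x h rkM[of x] dA dC by simp
    have "p \<le> vec_space.rank p (completion A x)"
      using rank_four_block_le1[OF cA[of x] cB[of x] cC[of x]] r by simp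
    then have "p \<le> maxRank A" using maxRank_ge[of A x] dA by simp
    then have mA: "maxRank A = p" using maxRank_le_rows[of A] dA by simp
    have "q \<le> vec_space.rank r (completion C x)"
      using rank_four_block_le2[OF cA[of x] cB[of x] cC[of x]] r by simp
    then have "q \<le> maxRank C" using maxRank_ge[of C x] dCr by simp
    then have mC: "maxRank C = q" using maxRank_le_cols[of C] dC by simp
    show "FRmR A \<and> FCmR C" using FR FC mA mC by simp
  qed
qed

end
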